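(* Let $\mathcal L$ be a finite distributive lattice, let $\mathbb F$ be the minimal multigraded free resolution of $H_{\mathcal L}$ and $\widetilde{\mathbb F}$ the minimal multigraded free resolution of $H_{\widetilde{\mathcal L}}$, both in the explicit form described in the context. Then the $S$-linear map $\pi:\sigma(\widetilde{\mathbb F})\to\mathbb F$ given by $\pi(\sigma(\widetilde b(r;T)))=(-1)^{|T|}\,b(r^T;T_r)$ is an isomorphism of complexes.
   Context: Let $P$ be the set of join-irreducible elements of $\mathcal L$ (elements with exactly one lower neighbor); for $p\in\mathcal L$ put $\ell(p)=\{q\in P:q\le p\}$. Let $K$ be a field, $S=K[x_p,y_p:p\in P]$, $u_q=\prod_{p\in\ell(q)}x_p\prod_{p\in P\setminus\ell(q)}y_p$ and $\widetilde u_q=\prod_{p\in P\setminus\ell(q)}x_p\prod_{p\in\ell(q)}y_p$ for $q\in\mathcal L$; $H_{\mathcal L}=(u_q:q\in\mathcal L)$, $H_{\widetilde{\mathcal L}}=(\widetilde u_q:q\in\mathcal L)$. $N(p)$ (resp. $M(p)$) is the set of lower (resp. upper) neighbors of $p$. For $q\in N(p)$, $p\setminus q$ is the unique element of $\ell(p)\setminus\ell(q)$; $p\setminus U=\{p\setminus q:q\in U\}$; for $s\in M(r)$, $s\setminus r$ is the unique element of $\ell(s)\setminus\ell(r)$ and $T\setminus r=\{s\setminus r:s\in T\}$. Fix a total order $<$ on $P$ extending its partial order and let $\lambda(q;U)=|\{u\in U: u<q\}|$. For $q\in\mathcal L$, $U\subseteq\mathcal L$: $q\wedge U=\{q\wedge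 u:u\in U\}$, $q\vee U=\{q\vee u:u\in U\}$. $\mathbb F$: $F_i$ is free with basis $b(p;U)$, $p\in\mathcal L$, $U\subseteq N(p)$, $|U|=i$, of multidegree $\mathrm{lcm}(u_p,u_q:q\in U)$, augmentation $b(p;\emptyset)\mapsto u_p$, differential $\partial(b(p;U))=\sum_{q\in U}(-1)^{\lambda(p\setminus q;\,p\setminus U)}\bigl(y_{p\setminus q}b(p;U\setminus\{q\})-x_{p\setminus q}b(q;q\wedge(U\setminus\{q\}))\bigr)$; this is a minimal multigraded free resolution of $H_{\mathcal L}$. $\widetilde{\mathbb F}$: $\widetilde F_i$ is free with basis $\widetilde b(r;T)$, $r\in\mathcal L$, $T\subseteq M(r)$, $|T|=i$, of multidegree $\mathrm{lcm}(\widetilde u_r,\widetilde u_s:s\in T)$, augmentation $\widetilde b(r;\emptyset)\mapsto\widetilde u_r$, differential $\widetilde\partial(\widetilde b(r;T))=\sum_{s\in T}(-1)^{\lambda(s\setminus r;\,T\setminus r)}\bigl(y_{s\setminus r}\widetilde b(r;T\setminus\{s\})-x_{s\setminus r}\widetilde b(s;s\vee(T\setminus\{s\}))\bigr)$; this is a minimal multigraded free resolution of $H_{\widetilde{\mathcal L}}$. Let $\sigma:S\to S$ be the involution $x_p\mapsto y_p$, $y_p\mapsto x_p$, let ${}^\sigma S$ be $S$ viewed as an $S$-module via $\sigma$, and $\sigma(\widetilde{\mathbb F})=\widetilde{\mathbb F}\otimes_S{}^\sigma S$, with basis $\sigma(\widetilde b(r;T))=\widetilde b(r;T)\otimes1$;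 it is a minimal free resolution of $\sigma(H_{\widetilde{\mathcal L}})=H_{\mathcal L}$. For $r\in\mathcal L$ and $T\subseteq M(r)$, $r^T$ is the join of all elements of $T$ and $T_r$ is the set of lower neighbors of $r^T$ in the interval $[r,r^T]$. *)

theory Defs
  imports Main "HOL-Library.Poly_Mapping"
begin

definition covers :: "'a::order \<Rightarrow> 'a \<Rightarrow> bool" where
  "covers q p \<longleftrightarrow> q < p \<and> \<not> (\<exists>z. q < z \<and> z < p)"

definition lowerN :: "'a::order \<Rightarrow> 'a set" where
  "lowerN p = {q. covers q p}"

definition upperN :: "'a::order \<Rightarrow> 'a set" where
  "upperN p = {s. covers p s}"

definition JI :: "'a::order set" where
  "JI = {p. card (lowerN p) = 1}"

definition ell :: "'a::order \<Rightarrow> 'a set" where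
  "ell p = {q \<in> JI. q \<le> p}"

text \<open>diffel p q: the unique element of ell p - ell q (used both for p\q, q in N(p),
  and for s\r, s in M(r)).\<close>
definition diffel :: "'a::order \<Rightarrow> 'a \<Rightarrow> 'a" where
  "diffel p q = the_elem (ell p - ell q)"

definition lam :: "('a \<Rightarrow> 'a \<Rightarrow> bool) \<Rightarrow> 'a \<Rightarrow> 'a set \<Rightarrow> nat" where
  "lam lt q U = card {u \<in> U. lt u q}"

text \<open>Variables: (p, True) is x_p, (p, False) is y_p.
  S is the subring of polynomials involving only variables indexed by P.\<close>
type_synonym ('a, 'k) spoly = "(('a \<times> bool) \<Rightarrow>\<^sub>0 nat) \<Rightarrow>\<^sub>0 'k"

definition Xv :: "'a \<Rightarrow> ('a, 'k::comm_ring_1) spoly" where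
  "Xv p = Poly_Mapping.single (Poly_Mapping.single (p, True) 1) 1"

definition Yv :: "'a \<Rightarrow> ('a, 'k::comm_ring_1) spoly" where
  "Yv p = Poly_Mapping.single (Poly_Mapping.single (p, False) 1) 1"

definition Scar :: "('a::order, 'k::comm_ring_1) spoly set" where
  "Scar = {f. \<forall>m \<in> Poly_Mapping.keys f. \<forall>v \<in> Poly_Mapping.keys m. fst v \<in> JI}"

definition swapv :: "'a \<times> bool \<Rightarrow> 'a \<times> bool" where
  "swapv v = (fst v, \<not> snd v)"

definition sigma :: "('a, 'k::comm_ring_1) spoly \<Rightarrow> ('a, 'k) spoly" where
  "sigma f = Poly_Mapping.map_key (Poly_Mapping.map_key swapv) f"

text \<open>A free S-module with (finite) basis B: coefficient functions B -> S, zero off B.\<close>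
definition Fmod :: "'b set \<Rightarrow> ('b \<Rightarrow> ('a::order, 'k::comm_ring_1) spoly) set" where
  "Fmod B = {f. (\<forall>b. b \<notin> B \<longrightarrow> f b = 0) \<and> (\<forall>b. f b \<in> Scar)}"

text \<open>The S-linear map sending basis element b (in B) to sum_b' M b b' * b'.\<close>
definition applyM :: "'b set \<Rightarrow> ('b \<Rightarrow> 'c \<Rightarrow> 'r::comm_ring_1) \<Rightarrow> ('b \<Rightarrow> 'r) \<Rightarrow> ('c \<Rightarrow> 'r)" where
  "applyM B M f = (\<lambda>c. \<Sum>b\<in>B. f b * M b c)"

definition Bas :: "nat \<Rightarrow> ('a::order \<times> 'a set) set" where
  "Bas i = {(p, U). U \<subseteq> lowerN p \<and> card U = i}"

definition Bast :: "nat \<Rightarrow> ('a::order \<times> 'a set) set" where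
  "Bast i = {(r, T). T \<subseteq> upperN r \<and> card T = i}"

text \<open>dcoef b c: coefficient of basis element c in the differential of b(p;U).\<close>
definition dcoef :: "('a::lattice \<Rightarrow> 'a \<Rightarrow> bool) \<Rightarrow> 'a \<times> 'a set \<Rightarrow> 'a \<times> 'a set \<Rightarrow> ('a, 'k::comm_ring_1) spoly" where
  "dcoef lt b c = (case b of (p, U) \<Rightarrow>
     \<Sum>q\<in>U. (-1) ^ lam lt (diffel p q) (diffel p ` U) *
        ((if c = (p, U - {q}) then Yv (diffel p q) else 0)
       - (if c = (q, (\<lambda>u. inf q u) ` (U - {q})) then Xv (diffel p q) else 0)))"

text \<open>dtcoef b c: coefficient of basis element c in the differential of tilde b(r;T).\<close>
definition dtcoef :: "('a::lattice \<Rightarrow> 'a \<Rightarrow> bool) \<Rightarrow> 'a \<times> 'a set \<Rightarrow> 'a \<times> 'a set \<Rightarrow> ('a, 'k::comm_ring_1) spoly" where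
  "dtcoef lt b c = (case b of (r, T) \<Rightarrow>
     \<Sum>s\<in>T. (-1) ^ lam lt (diffel s r) ((\<lambda>s'. diffel s' r) ` T) *
        ((if c = (r, T - {s}) then Yv (diffel s r) else 0)
       - (if c = (s, (\<lambda>t. sup s t) ` (T - {s})) then Xv (diffel s r) else 0)))"

text \<open>sigma(tilde F) = tilde F tensor sigma-twisted S: same basis sigma(tilde b(r;T)),
  differential with sigma applied to all coefficients.\<close>
definition sdtcoef :: "('a::lattice \<Rightarrow> 'a \<Rightarrow> bool) \<Rightarrow> 'a \<times> 'a set \<Rightarrow> 'a \<times> 'a set \<Rightarrow> ('a, 'k::comm_ring_1) spoly" where
  "sdtcoef lt b c = sigma (dtcoef lt b c)"

text \<open>r^T: the join of the elements of T (taken together with r, so r^{} = r).\<close>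
definition topT :: "'a::lattice \<Rightarrow> 'a set \<Rightarrow> 'a" where
  "topT r T = Sup_fin (insert r T)"

definition Tr :: "'a::lattice \<Rightarrow> 'a set \<Rightarrow> 'a set" where
  "Tr r T = {q. r \<le> q \<and> q \<le> topT r T \<and> covers q (topT r T)}"

definition pcoef :: "'a::lattice \<times> 'a set \<Rightarrow> 'a \<times> 'a set \<Rightarrow> ('a, 'k::comm_ring_1) spoly" where
  "pcoef b c = (case b of (r, T) \<Rightarrow>
     (if c = (topT r T, Tr r T) then (-1) ^ card T else 0))"

end

theory Submission
  imports Defs "HOL-Library.Dual_Ordered_Lattice"
begin

definition botT :: "'a::lattice \<Rightarrow> 'a set \<Rightarrow> 'a" where
  "botT r T = Inf_fin (insert r T)"

lemma topT_empty[simp]: "topT r {} = r"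
  by (simp add: topT_def)

lemma topT_insert: "finite A \<Longrightarrow> topT r (insert a A) = sup a (topT r A)"
  unfolding topT_def by (metis Sup_fin.insert finite_insert insert_commute insert_not_empty)

lemma topT_le_iff: "finite A \<Longrightarrow> topT r A \<le> y \<longleftrightarrow> r \<le> y \<and> (\<forall>a\<in>A. a \<le> y)"
  unfolding topT_def by (simp add: Sup_fin.bounded_iff)

lemma le_topT: "finite A \<Longrightarrow> a \<in> A \<Longrightarrow> a \<le> topT r A"
  unfolding topT_def by (simp add: Sup_fin.coboundedI)

lemma r_le_topT: "finite A \<Longrightarrow> r \<le> topT r A"
  unfolding topT_def by (simp add: Sup_fin.coboundedI)

lemma botT_empty[simp]: "botT r {} = r"
  by (simp add: botT_def)

lemma botT_insert: "finite A \<Longrightarrow> botT r (insert a A) = inf a (botT r A)"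
  unfolding botT_def by (metis Inf_fin.insert finite_insert insert_commute insert_not_empty)

lemma le_botT_iff: "finite A \<Longrightarrow> y \<le> botT r A \<longleftrightarrow> y \<le> r \<and> (\<forall>a\<in>A. y \<le> a)"
  unfolding botT_def by (simp add: Inf_fin.bounded_iff)

lemma botT_le: "finite A \<Longrightarrow> a \<in> A \<Longrightarrow> botT r A \<le> a"
  unfolding botT_def by (simp add: Inf_fin.coboundedI)

lemma botT_le_r: "finite A \<Longrightarrow> botT r A \<le> r"
  unfolding botT_def by (simp add: Inf_fin.coboundedI)

lemma topT_dual: "finite A \<Longrightarrow> topT (dual r) (dual ` A) = dual (botT r A)"
proof (induction A rule: finite_induct)
  case (insert x F)
  then show ?case by (simp only: image_insert topT_insert finite_imageI botT_insert dual_inf_eq)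
qed simp

lemma botT_dual: "finite A \<Longrightarrow> botT (dual r) (dual ` A) = dual (topT r A)"
proof (induction A rule: finite_induct)
  case (insert x F)
  then show ?case by (simp only: image_insert topT_insert finite_imageI botT_insert dual_sup_eq)
qed simp

lemma covers_dual: "covers (dual x) (dual y) \<longleftrightarrow> covers y x"
  unfolding covers_def by (metis dual_undual less_dual_iff)

lemma inf_topT: "finite A \<Longrightarrow> inf x (topT r A) = topT (inf x r) (inf x ` A)"
  for x :: "'a::distrib_lattice"
  by (induction A rule: finite_induct) (simp_all add: topT_insert inf_sup_distrib1)

lemma topT_mono: "finite B \<Longrightarrow> A \<subseteq> B \<Longrightarrow> topT r A \<le> topT r B"
  using finite_subset[of A B] by (auto simp: topT_le_iff r_le_topT le_topT)

lemma covers_lo: "covers a b \<Longrightarrow> a \<le> z \<Longrightarrow> z < b \<Longrightarrow> z = a"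
  unfolding covers_def using le_less by blast

lemma covers_hi: "covers a b \<Longrightarrow> a < z \<Longrightarrow> z \<le> b \<Longrightarrow> z = b"
  unfolding covers_def using le_less by blast

section \<open>Boolean intervals\<close>

locale bint =
  fixes r :: "'a::distrib_lattice" and T :: "'a set"
  assumes finT: "finite T" and cov: "\<And>s. s \<in> T \<Longrightarrow> covers r s"
begin

lemma finA: "A \<subseteq> T \<Longrightarrow> finite A"
  using finT finite_subset by blast

lemma r_less: "s \<in> T \<Longrightarrow> r < s"
  using cov covers_def by blast

lemma inf_two: "s \<in> T \<Longrightarrow> t \<in> T \<Longrightarrow> s \<noteq> t \<Longrightarrow> inf s t = r"
proof -
  assume a: "s \<in> T" "t \<in> T" "s \<noteq> t"
  have "r \<le> inf s t" using r_less a by (simp add: less_imp_le)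
  moreover have "inf s t \<noteq> s"
  proof
    assume "inf s t = s"
    then have "s \<le> t" by (metis inf.absorb_iff1)
    then show False using a covers_hi[OF cov[of t] r_less[of s]] by blast
  qed
  then have "inf s t < s" by (simp add: less_le)
  ultimately show ?thesis using covers_lo[OF cov[OF a(1)]] by blast
qed

lemma le_top_iff: "A \<subseteq> T \<Longrightarrow> s \<in> T \<Longrightarrow> s \<le> topT r A \<longleftrightarrow> s \<in> A"
proof
  assume A: "A \<subseteq> T" and s: "s \<in> T" and le: "s \<le> topT r A"
  show "s \<in> A"
  proof (rule ccontr)
    assume "s \<notin> A"
    then have "inf s ` A \<subseteq> {r}" using A s inf_two by auto
    then have "topT r (inf s ` A) = r"
      using finA[OF A] by (intro antisym) (auto simp: topT_le_iff r_le_topT)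
    then have "inf s (topT r A) = r"
      using inf_topT[OF finA[OF A], of s r] r_less[OF s] by (simp add: inf_absorb2)
    then show False using le r_less[OF s] by (simp add: inf_absorb1)
  qed
next
  assume "A \<subseteq> T" "s \<in> A" then show "s \<le> topT r A" using finA le_topT by blast
qed

definition psi where "psi x = {s \<in> T. s \<le> x}"

lemma recon: "r \<le> x \<Longrightarrow> x \<le> topT r T \<Longrightarrow> x = topT r (psi x)"
proof -
  assume a: "r \<le> x" "x \<le> topT r T"
  have fp: "finite (psi x)" using finT by (simp add: psi_def)
  have "x = inf x (topT r T)" using a by (simp add: inf_absorb1)
  also have "\<dots> = topT r (inf x ` T)" using inf_topT[OF finT, of x r] a by (simp add: inf_absorb2)
  also have "\<dots> \<le> topT r (psi x)"
  proof (subst topT_le_iff)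
    show "finite (inf x ` T)" using finT by simp
    show "r \<le> topT r (psi x) \<and> (\<forall>a\<in>inf x ` T. a \<le> topT r (psi x))"
    proof (intro conjI ballI)
      show "r \<le> topT r (psi x)" using fp r_le_topT by blast
      fix a assume "a \<in> inf x ` T"
      then obtain s where s: "s \<in> T" "a = inf x s" by auto
      show "a \<le> topT r (psi x)"
      proof (cases "s \<le> x")
        case True
        then have "s \<in> psi x" using s psi_def by auto
        then show ?thesis using s fp le_topT by (metis inf.coboundedI2)
      next
        case False
        have "r \<le> inf x s" using a r_less[OF s(1)] by simp
        moreover have "inf x s < s"
        proof (rule le_neq_trans)
          show "inf x s \<le> s" by simp
          show "inf x s \<noteq> s" using False inf.absorb_iff2[of s x] by simp
        qed
        ultimately have "inf x s = r" using covers_lo[OF cov[OF s(1)]] by blast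
        then show ?thesis using s fp r_le_topT by metis
      qed
    qed
  qed
  finally have "x \<le> topT r (psi x)" .
  moreover have "topT r (psi x) \<le> x" using fp a by (simp add: topT_le_iff psi_def)
  ultimately show ?thesis by simp
qed

lemma psi_top: "A \<subseteq> T \<Longrightarrow> psi (topT r A) = A"
  unfolding psi_def using le_top_iff by blast

lemma top_inj: "A \<subseteq> T \<Longrightarrow> B \<subseteq> T \<Longrightarrow> topT r A = topT r B \<Longrightarrow> A = B"
proof -
  assume A: "A \<subseteq> T" and B: "B \<subseteq> T" and e: "topT r A = topT r B"
  have "A = psi (topT r A)" using psi_top[OF A] by simp
  also have "\<dots> = B" using e psi_top[OF B] by simp
  finally show ?thesis .
qed

lemma top_le_iff: "A \<subseteq> T \<Longrightarrow> B \<subseteq> T \<Longrightarrow> topT r A \<le> topT r B \<longleftrightarrow> A \<subseteq> B"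
proof
  assume A: "A \<subseteq> T" and B: "B \<subseteq> T" and le: "topT r A \<le> topT r B"
  show "A \<subseteq> B"
  proof
    fix a assume a: "a \<in> A"
    have "a \<le> topT r A" using le_topT finA A a by blast
    then have "a \<le> topT r B" using le by (rule order_trans)
    then show "a \<in> B" using le_top_iff[OF B] A a by blast
  qed
next
  assume "A \<subseteq> T" "B \<subseteq> T" "A \<subseteq> B"
  then show "topT r A \<le> topT r B" using topT_mono finA by blast
qed

lemma cover_step: "A \<subseteq> T \<Longrightarrow> s \<in> T - A \<Longrightarrow> covers (topT r A) (topT r (insert s A))"
proof -
  assume A: "A \<subseteq> T" and s: "s \<in> T - A"
  have iA: "insert s A \<subseteq> T" using A s by auto
  have lt: "topT r A < topT r (insert s A)"
    using top_le_iff[OF A iA] top_inj[OF A iA] s by (auto simp: less_le)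
  have "\<not> (\<exists>z. topT r A < z \<and> z < topT r (insert s A))"
  proof
    assume "\<exists>z. topT r A < z \<and> z < topT r (insert s A)"
    then obtain z where z: "topT r A < z" "z < topT r (insert s A)" by blast
    have rz: "r \<le> z" using z(1) r_le_topT[OF finA[OF A]] by (meson less_imp_le order_trans)
    have zT: "z \<le> topT r T" using z(2) topT_mono[OF finT iA, of r] by (meson less_imp_le order_trans)
    have pz: "psi z \<subseteq> T" by (auto simp: psi_def)
    have e: "z = topT r (psi z)" using recon rz zT by blast
    have "A \<subseteq> psi z" using z e top_le_iff[OF A pz] by auto
    moreover have "psi z \<subseteq> insert s A" using z e top_le_iff[OF pz iA] by auto
    ultimately have "psi z = A \<or> psi z = insert s A" by auto
    then show False using z e by auto
  qed
  then show ?thesis using lt covers_def by blast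
qed

definition u where "u s = topT r (T - {s})"

lemma coatom: "s \<in> T \<Longrightarrow> covers (u s) (topT r T)"
  unfolding u_def using cover_step[of "T - {s}" s] by (simp add: insert_absorb)

lemma coatom_inv: "r \<le> x \<Longrightarrow> covers x (topT r T) \<Longrightarrow> \<exists>s\<in>T. x = u s"
proof -
  assume a: "r \<le> x" "covers x (topT r T)"
  have xle: "x \<le> topT r T" using a(2) unfolding covers_def by (simp add: less_imp_le)
  have e: "x = topT r (psi x)" using recon a xle by blast
  have pz: "psi x \<subseteq> T" by (auto simp: psi_def)
  have "psi x \<noteq> T"
  proof
    assume "psi x = T"
    then have "x = topT r T" using e by simp
    then show False using a(2) by (simp add: covers_def)
  qed
  then obtain s where s: "s \<in> T" "s \<notin> psi x" using pz by auto
  have ts: "T - {s} \<subseteq> T" by auto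
  have "x \<le> u s" unfolding u_def using e top_le_iff[OF pz ts] s pz by auto
  moreover have "u s < topT r T" using coatom[OF s(1)] covers_def by auto
  ultimately have "x = u s" using covers_lo[OF a(2)] by blast
  then show ?thesis using s by blast
qed

lemma u_inj: "inj_on u T"
  unfolding inj_on_def
proof (intro ballI impI)
  fix x y assume x: "x \<in> T" and y: "y \<in> T" and e: "u x = u y"
  show "x = y"
  proof (rule ccontr)
    assume "x \<noteq> y"
    then have "y \<le> u x" unfolding u_def using le_top_iff[of "T - {x}" y] y by blast
    then have "y \<le> topT r (T - {y})" using e u_def by simp
    then show False using le_top_iff[of "T - {y}" y] y by blast
  qed
qed

lemma Tr_eq: "Tr r T = u ` T"
proof
  show "Tr r T \<subseteq> u ` T" unfolding Tr_def using coatom_inv by blast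
  show "u ` T \<subseteq> Tr r T"
  proof
    fix x assume "x \<in> u ` T"
    then obtain s where s: "s \<in> T" "x = u s" by blast
    have c: "covers x (topT r T)" using coatom s by simp
    moreover have "x \<le> topT r T" using c unfolding covers_def by (simp add: less_imp_le)
    moreover have "r \<le> x" unfolding s u_def by (rule r_le_topT) (use finT in simp)
    ultimately show "x \<in> Tr r T" by (simp add: Tr_def)
  qed
qed

lemma card_Tr: "card (Tr r T) = card T"
  by (simp add: Tr_eq card_image[OF u_inj])

lemma Tr_sub: "Tr r T \<subseteq> lowerN (topT r T)"
  unfolding Tr_def lowerN_def by blast

lemma inf_top: "A \<subseteq> T \<Longrightarrow> B \<subseteq> T \<Longrightarrow> inf (topT r A) (topT r B) = topT r (A \<inter> B)"
proof -
  assume A: "A \<subseteq> T" and B: "B \<subseteq> T"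
  let ?x = "inf (topT r A) (topT r B)"
  have "r \<le> ?x" by (simp add: r_le_topT[OF finA[OF A]] r_le_topT[OF finA[OF B]])
  moreover have "?x \<le> topT r T" using topT_mono[OF finT A] by (meson le_infI1)
  ultimately have e: "?x = topT r (psi ?x)" using recon by blast
  have "\<forall>s\<in>T. (s \<le> ?x) = (s \<in> A \<and> s \<in> B)" using le_top_iff[OF A] le_top_iff[OF B] by simp
  then have "psi ?x = A \<inter> B" using A B unfolding psi_def by blast
  then show ?thesis using e by simp
qed

end


context bint
begin

lemma top_single: "s \<in> T \<Longrightarrow> topT r {s} = s"
proof -
  assume s: "s \<in> T"
  have "r \<le> s" using r_less[OF s] by (rule less_imp_le)
  then show ?thesis using topT_insert[of "{}" r s] by (simp add: sup_absorb1)
qed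

lemma inf_s_u: "s \<in> T \<Longrightarrow> inf s (u s) = r"
proof -
  assume s: "s \<in> T"
  have "inf s (u s) = inf (topT r {s}) (topT r (T - {s}))" using top_single[OF s] u_def by simp
  also have "\<dots> = topT r ({s} \<inter> (T - {s}))" using s by (intro inf_top) auto
  finally show ?thesis by simp
qed

lemma sup_s_u: "s \<in> T \<Longrightarrow> sup s (u s) = topT r T"
proof -
  assume s: "s \<in> T"
  have "topT r T = topT r (insert s (T - {s}))" using s by (simp add: insert_absorb)
  also have "\<dots> = sup s (u s)" unfolding u_def by (rule topT_insert) (use finT in simp)
  finally show ?thesis by simp
qed

lemma u_diff: "s \<in> T \<Longrightarrow> u ` T - {u s} = u ` (T - {s})"
  using inj_on_image_set_diff[OF u_inj, of T "{s}"] by simp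

lemma Tr_minus: "s \<in> T \<Longrightarrow> Tr r (T - {s}) = inf (u s) ` (Tr r T - {u s})"
proof -
  assume s: "s \<in> T"
  interpret B: bint r "T - {s}" using finT cov by unfold_locales auto
  have "Tr r (T - {s}) = B.u ` (T - {s})" by (rule B.Tr_eq)
  also have "\<dots> = (\<lambda>t. inf (u s) (u t)) ` (T - {s})"
  proof (rule image_cong[OF refl])
    fix t assume t: "t \<in> T - {s}"
    have "inf (u s) (u t) = topT r ((T - {s}) \<inter> (T - {t}))" unfolding u_def by (rule inf_top) auto
    also have "(T - {s}) \<inter> (T - {t}) = T - {s} - {t}" by auto
    finally show "B.u t = inf (u s) (u t)" by (simp add: B.u_def)
  qed
  also have "\<dots> = inf (u s) ` (u ` (T - {s}))" by (simp add: image_image)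
  also have "\<dots> = inf (u s) ` (Tr r T - {u s})" using u_diff[OF s] Tr_eq by simp
  finally show ?thesis .
qed

lemma top_sup_img: assumes s: "s \<in> T" shows "topT s (sup s ` (T - {s})) = topT r T"
proof (rule antisym)
  have f: "finite (sup s ` (T - {s}))" using finT by simp
  have sl: "s \<le> topT r T" using le_topT[OF finT s] .
  show "topT s (sup s ` (T - {s})) \<le> topT r T"
    unfolding topT_le_iff[OF f]
  proof (intro conjI ballI)
    show "s \<le> topT r T" by (rule sl)
    fix a assume "a \<in> sup s ` (T - {s})"
    then obtain t where "t \<in> T" "a = sup s t" by blast
    then show "a \<le> topT r T" using sl le_topT[OF finT, of t r] by simp
  qed
  show "topT r T \<le> topT s (sup s ` (T - {s}))"
    unfolding topT_le_iff[OF finT]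
  proof (intro conjI ballI)
    have "s \<le> topT s (sup s ` (T - {s}))" by (rule r_le_topT[OF f])
    then show "r \<le> topT s (sup s ` (T - {s}))" using r_less[OF s] by (meson less_imp_le order_trans)
    fix t assume t: "t \<in> T"
    show "t \<le> topT s (sup s ` (T - {s}))"
    proof (cases "t = s")
      case True then show ?thesis using r_le_topT[OF f] by simp
    next
      case False
      then have "sup s t \<le> topT s (sup s ` (T - {s}))" using t le_topT[OF f] by blast
      then show ?thesis by (meson le_supE)
    qed
  qed
qed

lemma Tr_sup_img: assumes s: "s \<in> T" shows "Tr s (sup s ` (T - {s})) = Tr r T - {u s}"
proof -
  have rs: "\<And>q. s \<le> q \<Longrightarrow> r \<le> q" using r_less[OF s] by (meson less_imp_le order_trans)
  have "Tr s (sup s ` (T - {s})) = {q \<in> Tr r T. s \<le> q}"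
    unfolding Tr_def top_sup_img[OF s] using rs by blast
  also have "\<dots> = {q \<in> u ` T. s \<le> q}" using Tr_eq by simp
  also have "\<dots> = u ` (T - {s})"
  proof -
    have *: "s \<le> u t \<longleftrightarrow> t \<noteq> s" if t: "t \<in> T" for t
    proof -
      have "s \<le> u t \<longleftrightarrow> s \<in> T - {t}" unfolding u_def using s by (intro le_top_iff) auto
      then show ?thesis using s by blast
    qed
    show ?thesis
    proof (rule set_eqI)
      fix q show "q \<in> {q \<in> u ` T. s \<le> q} \<longleftrightarrow> q \<in> u ` (T - {s})"
        using * by blast
    qed
  qed
  also have "\<dots> = Tr r T - {u s}" using u_diff[OF s] Tr_eq by simp
  finally show ?thesis .
qed

lemma sup_img_upper: "s \<in> T \<Longrightarrow> sup s ` (T - {s}) \<subseteq> upperN s"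
proof
  fix x assume s: "s \<in> T" and "x \<in> sup s ` (T - {s})"
  then obtain t where t: "t \<in> T - {s}" "x = sup s t" by blast
  have "covers (topT r {s}) (topT r (insert t {s}))" using s t by (intro cover_step) auto
  moreover have "topT r (insert t {s}) = sup s t"
    using topT_insert[of "{s}" r t] top_single[OF s] by (simp add: sup_commute)
  ultimately show "x \<in> upperN s" using top_single[OF s] t by (simp add: upperN_def)
qed

lemma sup_img_inj: "s \<in> T \<Longrightarrow> inj_on (sup s) (T - {s})"
proof (rule inj_onI)
  fix t t' assume s: "s \<in> T" and t: "t \<in> T - {s}" and t': "t' \<in> T - {s}" and e: "sup s t = sup s t'"
  have "topT r {t, s} = sup s t" using topT_insert[of "{s}" r t] top_single[OF s] by (simp add: sup_commute)
  moreover have "topT r {t', s} = sup s t'" using topT_insert[of "{s}" r t'] top_single[OF s] by (simp add: sup_commute)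
  ultimately have "{t, s} = {t', s}" using e s t t' by (intro top_inj) auto
  then show "t = t'" using t t' by (auto simp: doubleton_eq_iff)
qed

lemma bot_coatoms: "B \<subseteq> T \<Longrightarrow> botT (topT r T) (u ` B) = topT r (T - B)"
proof -
  assume B: "B \<subseteq> T"
  have "finite B" using finA[OF B] .
  then show ?thesis using B
  proof (induction B rule: finite_induct)
    case empty then show ?case by simp
  next
    case (insert b F)
    have "botT (topT r T) (u ` insert b F) = inf (u b) (botT (topT r T) (u ` F))"
      using insert by (simp add: botT_insert)
    also have "\<dots> = inf (topT r (T - {b})) (topT r (T - F))" using insert by (simp add: u_def)
    also have "\<dots> = topT r ((T - {b}) \<inter> (T - F))" by (rule inf_top) auto
    also have "(T - {b}) \<inter> (T - F) = T - insert b F" by auto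
    finally show ?case .
  qed
qed

lemma bot_recover: "botT (topT r T) (Tr r T) = r"
  using bot_coatoms[of T] Tr_eq by simp

lemma T_recover: "T = {s. covers r s \<and> s \<le> topT r T}"
proof
  show "T \<subseteq> {s. covers r s \<and> s \<le> topT r T}" using cov le_topT[OF finT] by auto
  show "{s. covers r s \<and> s \<le> topT r T} \<subseteq> T"
  proof
    fix s assume "s \<in> {s. covers r s \<and> s \<le> topT r T}"
    then have c: "covers r s" and le: "s \<le> topT r T" by auto
    have rs: "r < s" using c covers_def by blast
    have "r \<le> s" using rs by (rule less_imp_le)
    then have e: "s = topT r (psi s)" using recon le by blast
    have "psi s \<noteq> {}"
    proof
      assume "psi s = {}"
      then have "s = r" using e by (metis topT_empty)
      then show False using rs by simp
    qed
    then obtain t where t: "t \<in> T" "t \<le> s" by (auto simp: psi_def)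
    have "t = s" using covers_hi[OF c r_less[OF t(1)] t(2)] .
    then show "s \<in> T" using t by simp
  qed
qed

end

section \<open>Join-irreducibles and the bijection\<close>

lemma below_cover:
  fixes x y :: "'a::{finite, order}"
  assumes "x < y" shows "\<exists>z. x \<le> z \<and> covers z y"
proof -
  let ?S = "{z. x \<le> z \<and> z < y}"
  have "finite ?S" by simp
  moreover have "?S \<noteq> {}" using assms by auto
  ultimately obtain m where m: "m \<in> ?S" "\<forall>b\<in>?S. m \<le> b \<longrightarrow> m = b"
    using finite_has_maximal by blast
  have "covers m y"
    unfolding covers_def
  proof (intro conjI notI)
    show "m < y" using m by simp
    assume "\<exists>z. m < z \<and> z < y"
    then obtain z where z: "m < z" "z < y" by blast
    then have "z \<in> ?S" using m by auto
    then show False using m z by (metis less_imp_le less_irrefl)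
  qed
  then show ?thesis using m by blast
qed

lemma JI_prime:
  fixes j a b :: "'a::{finite, distrib_lattice}"
  assumes j: "j \<in> JI" and le: "j \<le> sup a b"
  shows "j \<le> a \<or> j \<le> b"
proof (rule ccontr)
  assume n: "\<not> (j \<le> a \<or> j \<le> b)"
  from j have "card (lowerN j) = 1" by (simp add: JI_def)
  then obtain c where c: "lowerN j = {c}" by (rule card_1_singletonE)
  have below: "\<And>x. x < j \<Longrightarrow> x \<le> c"
  proof -
    fix x assume "x < j"
    then obtain z where "x \<le> z" "covers z j" using below_cover by blast
    then show "x \<le> c" using c by (auto simp: lowerN_def)
  qed
  have "inf j a < j" using n by (metis inf.absorb_iff1 inf_le1 order.not_eq_order_implies_strict)
  then have 1: "inf j a \<le> c" by (rule below)
  have "inf j b < j" using n by (metis inf.absorb_iff1 inf_le1 order.not_eq_order_implies_strict)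
  then have 2: "inf j b \<le> c" by (rule below)
  have "j = inf j (sup a b)" using le by (simp add: inf_absorb1)
  also have "\<dots> = sup (inf j a) (inf j b)" by (rule inf_sup_distrib1)
  also have "\<dots> \<le> c" using 1 2 by simp
  finally have "j \<le> c" .
  moreover have "c < j" using c by (auto simp: lowerN_def covers_def)
  ultimately show False by simp
qed

lemma ell_diff:
  fixes s q p r :: "'a::{finite, distrib_lattice}"
  assumes "sup s q = p" "inf s q = r"
  shows "ell p - ell q = ell s - ell r"
proof -
  have "\<And>j. j \<in> JI \<Longrightarrow> (j \<le> p \<and> \<not> j \<le> q) \<longleftrightarrow> (j \<le> s \<and> \<not> j \<le> r)"
  proof -
    fix j :: 'a assume j: "j \<in> JI"
    show "(j \<le> p \<and> \<not> j \<le> q) \<longleftrightarrow> (j \<le> s \<and> \<not> j \<le> r)"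
    proof
      assume a: "j \<le> p \<and> \<not> j \<le> q"
      then have "j \<le> s" using JI_prime[OF j, of s q] assms by auto
      moreover have "\<not> j \<le> r" using a assms by (metis inf.coboundedI2 inf_le2 order_trans)
      ultimately show "j \<le> s \<and> \<not> j \<le> r" by simp
    next
      assume a: "j \<le> s \<and> \<not> j \<le> r"
      then have "j \<le> p" using assms by (metis le_supI1)
      moreover have "\<not> j \<le> q" using a assms by (metis le_inf_iff)
      ultimately show "j \<le> p \<and> \<not> j \<le> q" by simp
    qed
  qed
  then show ?thesis by (auto simp: ell_def)
qed

lemma bint_upper: "T \<subseteq> upperN r \<Longrightarrow> bint r (T :: 'a::{finite,distrib_lattice} set)"
  by unfold_locales (auto simp: upperN_def)

lemma pi0_in:
  fixes r :: "'a::{finite,distrib_lattice}"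
  assumes "(r, T) \<in> Bast i" shows "(topT r T, Tr r T) \<in> Bas i"
proof -
  have T: "T \<subseteq> upperN r" "card T = i" using assms by (auto simp: Bast_def)
  interpret bint r T by (rule bint_upper[OF T(1)])
  show ?thesis using Tr_sub card_Tr T by (simp add: Bas_def)
qed

lemma pi0_inj:
  fixes r :: "'a::{finite,distrib_lattice}"
  assumes "T \<subseteq> upperN r" "T' \<subseteq> upperN r'" "topT r T = topT r' T'" "Tr r T = Tr r' T'"
  shows "r = r' \<and> T = T'"
proof -
  interpret A: bint r T by (rule bint_upper[OF assms(1)])
  interpret B: bint r' T' by (rule bint_upper[OF assms(2)])
  have "r = r'" using A.bot_recover B.bot_recover assms by metis
  moreover then have "T = T'" using A.T_recover B.T_recover assms by metis
  ultimately show ?thesis by simp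
qed

lemma pi0_surj:
  fixes p :: "'a::{finite,distrib_lattice}"
  assumes "(p, U) \<in> Bas i" shows "\<exists>r T. (r, T) \<in> Bast i \<and> topT r T = p \<and> Tr r T = U"
proof -
  have U: "U \<subseteq> lowerN p" "card U = i" using assms by (auto simp: Bas_def)
  have finU: "finite U" by simp
  interpret D: bint "dual p" "dual ` U"
  proof unfold_locales
    show "finite (dual ` U)" by simp
    fix s assume "s \<in> dual ` U"
    then obtain x where x: "x \<in> U" "s = dual x" by blast
    then show "covers (dual p) s" using U(1) by (simp add: covers_dual lowerN_def subset_iff)
  qed
  define r where "r = botT p U"
  define t where "t x = botT p (U - {x})" for x
  define T where "T = t ` U"
  have top_dual: "topT (dual p) (dual ` U) = dual r" unfolding r_def by (rule topT_dual[OF finU])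
  have u_dual: "D.u (dual x) = dual (t x)" if "x \<in> U" for x
  proof -
    have "dual ` U - {dual x} = dual ` (U - {x})" using image_set_diff[OF inj_dual, of U "{x}"] by simp
    moreover have "topT (dual p) (dual ` (U - {x})) = dual (botT p (U - {x}))" by (rule topT_dual) simp
    ultimately show ?thesis unfolding D.u_def t_def by simp
  qed
  have cov_t: "covers r (t x)" if "x \<in> U" for x
  proof -
    have "dual x \<in> dual ` U" using that by simp
    then have "covers (D.u (dual x)) (topT (dual p) (dual ` U))" by (rule D.coatom)
    then have "covers (dual (t x)) (dual r)" using u_dual[OF that] top_dual by simp
    then show ?thesis by (simp add: covers_dual)
  qed
  have t_inj: "inj_on t U"
  proof (rule inj_onI)
    fix x y assume "x \<in> U" "y \<in> U" "t x = t y"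
    then have "D.u (dual x) = D.u (dual y)" using u_dual by simp
    then have "dual x = dual y" using D.u_inj \<open>x \<in> U\<close> \<open>y \<in> U\<close> by (auto dest: inj_onD)
    then show "x = y" by simp
  qed
  have Tup: "T \<subseteq> upperN r" using cov_t by (auto simp: T_def upperN_def)
  have cardT: "card T = i" using card_image[OF t_inj] U(2) T_def by simp
  interpret B: bint r T by (rule bint_upper[OF Tup])
  have topB: "topT r (t ` V) = botT p (U - V)" if V: "V \<subseteq> U" for V
  proof -
    have "dual ` V \<subseteq> dual ` U" using V by (rule image_mono)
    then have "botT (topT (dual p) (dual ` U)) (D.u ` dual ` V) = topT (dual p) (dual ` U - dual ` V)"
      by (rule D.bot_coatoms)
    then have "botT (dual r) (D.u ` dual ` V) = topT (dual p) (dual ` U - dual ` V)"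
      using top_dual by simp
    moreover have "D.u ` dual ` V = dual ` t ` V"
    proof -
      have "D.u ` dual ` V = (\<lambda>x. D.u (dual x)) ` V" by (simp add: image_image)
      also have "\<dots> = (\<lambda>x. dual (t x)) ` V" using u_dual V by (intro image_cong) auto
      also have "\<dots> = dual ` t ` V" by (simp add: image_image)
      finally show ?thesis .
    qed
    moreover have "dual ` U - dual ` V = dual ` (U - V)" using image_set_diff[OF inj_dual, of U V] by simp
    ultimately have "botT (dual r) (dual ` t ` V) = topT (dual p) (dual ` (U - V))" by simp
    moreover have "botT (dual r) (dual ` t ` V) = dual (topT r (t ` V))" by (rule botT_dual) simp
    moreover have "topT (dual p) (dual ` (U - V)) = dual (botT p (U - V))" by (rule topT_dual) simp
    ultimately have "dual (topT r (t ` V)) = dual (botT p (U - V))" by simp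
    then show ?thesis by simp
  qed
  have top_p: "topT r T = p" using topB[of U] T_def by simp
  have "Tr r T = B.u ` T" by (rule B.Tr_eq)
  also have "\<dots> = U"
  proof -
    have "B.u (t x) = x" if x: "x \<in> U" for x
    proof -
      have "T - {t x} = t ` (U - {x})" unfolding T_def using t_inj x by (auto simp: inj_on_eq_iff)
      then have "B.u (t x) = botT p (U - (U - {x}))" unfolding B.u_def using topB[of "U - {x}"] by simp
      also have "U - (U - {x}) = {x}" using x by auto
      also have "botT p {x} = x"
      proof -
        have "x < p" using U(1) x by (auto simp: lowerN_def covers_def)
        then have "x \<le> p" by (rule less_imp_le)
        then show ?thesis using botT_insert[of "{}" p x] by (simp add: inf_absorb1)
      qed
      finally show ?thesis .
    qed
    then show ?thesis unfolding T_def by (simp add: image_image)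
  qed
  finally show ?thesis using Tup cardT top_p by (auto simp: Bast_def)
qed



section \<open>The involution sigma\<close>

lemma inj_swapv: "inj swapv"
proof (rule injI)
  fix x y :: "'a \<times> bool" assume "swapv x = swapv y"
  then show "x = y" by (cases x; cases y) (simp add: swapv_def)
qed

lemma swapv_swapv: "swapv \<circ> swapv = (\<lambda>x. x)"
  by (rule ext) (simp add: swapv_def)

lemma mk_invol: "Poly_Mapping.map_key swapv (Poly_Mapping.map_key swapv m) = m"
  by (simp only: map_key_compose[OF inj_swapv inj_swapv] swapv_swapv map_key_id)

lemma inj_mk: "inj (Poly_Mapping.map_key swapv :: ('a \<times> bool \<Rightarrow>\<^sub>0 nat) \<Rightarrow> _)"
proof (rule injI)
  fix x y :: "'a \<times> bool \<Rightarrow>\<^sub>0 nat"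
  assume "Poly_Mapping.map_key swapv x = Poly_Mapping.map_key swapv y"
  then have "Poly_Mapping.map_key swapv (Poly_Mapping.map_key swapv x) = Poly_Mapping.map_key swapv (Poly_Mapping.map_key swapv y)" by simp
  then show "x = y" by (simp only: mk_invol)
qed

lemma sigma_add: "sigma (a + b) = sigma a + sigma b"
  unfolding sigma_def by (rule map_key_plus[OF inj_mk])

lemma sigma_zero[simp]: "sigma 0 = 0"
  unfolding sigma_def by (rule map_key_zero[OF inj_mk])

lemma sigma_neg: "sigma (- a) = - sigma a"
proof -
  have "sigma (- a) + sigma a = 0" using sigma_add[of "- a" a] by simp
  then show ?thesis by (simp add: eq_neg_iff_add_eq_0)
qed

lemma sigma_diff: "sigma (a - b) = sigma a - sigma b"
  using sigma_add[of a "- b"] sigma_neg[of b] by simp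

lemma sigma_sum: "finite A \<Longrightarrow> sigma (\<Sum>x\<in>A. g x) = (\<Sum>x\<in>A. sigma (g x))"
  by (induction A rule: finite_induct) (simp_all add: sigma_add)

lemma sigma_sign: "sigma ((-1) ^ k * a) = (-1) ^ k * sigma a"
  by (cases "even k") (simp_all add: sigma_neg)

lemma sigma_if0: "sigma (if c then a else 0) = (if c then sigma a else 0)"
  by simp

lemma sigma_Yv: "sigma (Yv p :: ('a, 'k::comm_ring_1) spoly) = Xv p"
proof -
  have k: "Poly_Mapping.map_key swapv (Poly_Mapping.single (p, True) 1) = Poly_Mapping.single (p, False) (1::nat)"
    using map_key_single[OF inj_swapv, of "(p, False)" "1::nat"] by (simp add: swapv_def)
  have "(Yv p :: ('a, 'k) spoly) = Poly_Mapping.single (Poly_Mapping.map_key swapv (Poly_Mapping.single (p, True) 1)) 1"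
    unfolding Yv_def k ..
  then show ?thesis unfolding sigma_def Xv_def using map_key_single[OF inj_mk] by simp
qed

lemma sigma_Xv: "sigma (Xv p :: ('a, 'k::comm_ring_1) spoly) = Yv p"
proof -
  have k: "Poly_Mapping.map_key swapv (Poly_Mapping.single (p, False) 1) = Poly_Mapping.single (p, True) (1::nat)"
    using map_key_single[OF inj_swapv, of "(p, True)" "1::nat"] by (simp add: swapv_def)
  have "(Xv p :: ('a, 'k) spoly) = Poly_Mapping.single (Poly_Mapping.map_key swapv (Poly_Mapping.single (p, False) 1)) 1"
    unfolding Xv_def k ..
  then show ?thesis unfolding sigma_def Yv_def using map_key_single[OF inj_mk] by simp
qed

lemma Scar_zero: "0 \<in> Scar"
  by (simp add: Scar_def)

lemma Scar_sign: "a \<in> Scar \<Longrightarrow> (-1) ^ k * a \<in> Scar"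
  by (cases "even k") (simp_all add: Scar_def)

lemma sdt_expand:
  fixes r :: "'a::{finite,distrib_lattice}"
  shows "sdtcoef lt (r, T) b =
   (\<Sum>s\<in>T. (-1) ^ lam lt (diffel s r) ((\<lambda>s'. diffel s' r) ` T) *
        ((if b = (r, T - {s}) then Xv (diffel s r) else 0)
       - (if b = (s, (\<lambda>t. sup s t) ` (T - {s})) then Yv (diffel s r) else 0)))"
proof -
  have "finite T" by simp
  then show ?thesis
    unfolding sdtcoef_def dtcoef_def
    by (simp only: prod.case sigma_sum sigma_sign sigma_diff sigma_if0 sigma_Yv sigma_Xv sigma_zero)
qed


section \<open>The map pi on basis elements\<close>

lemma finite_any: "finite (A :: ('a::finite) set)"
  by simp

lemma pcoef_eq:
  fixes r :: "'a::{finite,distrib_lattice}"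
  assumes b: "(r, T) \<in> Bast i" and b': "(r', T') \<in> Bast i"
  shows "(pcoef (r, T) (topT r' T', Tr r' T') :: ('a, 'k::comm_ring_1) spoly)
         = (if (r, T) = (r', T') then (-1) ^ i else 0)"
proof -
  have T: "T \<subseteq> upperN r" "card T = i" using b by (auto simp: Bast_def)
  have T': "T' \<subseteq> upperN r'" using b' by (auto simp: Bast_def)
  have "((topT r' T', Tr r' T') = (topT r T, Tr r T)) \<longleftrightarrow> (r, T) = (r', T')"
    using pi0_inj[OF T(1) T'] by auto
  then show ?thesis unfolding pcoef_def using T(2) by auto
qed

lemma phi_at:
  fixes r0 :: "'a::{finite,distrib_lattice}"
    and f :: "'a \<times> 'a set \<Rightarrow> ('a, 'k::comm_ring_1) spoly"
  assumes b0: "(r0, T0) \<in> Bast i"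
  shows "applyM (Bast i) (pcoef :: _ \<Rightarrow> _ \<Rightarrow> ('a, 'k::comm_ring_1) spoly) f (topT r0 T0, Tr r0 T0)
         = (-1) ^ i * f (r0, T0)"
proof -
  have "applyM (Bast i) (pcoef :: _ \<Rightarrow> _ \<Rightarrow> ('a, 'k) spoly) f (topT r0 T0, Tr r0 T0)
      = (\<Sum>b\<in>Bast i. if b = (r0, T0) then f b * (-1) ^ i else 0)"
    unfolding applyM_def
  proof (rule sum.cong[OF refl])
    fix b :: "'a \<times> 'a set" assume b: "b \<in> Bast i"
    obtain r T where rT: "b = (r, T)" by (cases b)
    have "(pcoef b (topT r0 T0, Tr r0 T0) :: ('a, 'k) spoly) = (if b = (r0, T0) then (-1) ^ i else 0)"
      unfolding rT by (rule pcoef_eq) (use b b0 rT in simp_all)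
    then show "f b * pcoef b (topT r0 T0, Tr r0 T0) = (if b = (r0, T0) then f b * (-1) ^ i else 0)"
      by simp
  qed
  also have "\<dots> = f (r0, T0) * (-1) ^ i" using b0 by (simp add: finite_any)
  finally show ?thesis by (simp add: mult.commute)
qed

lemma phi_off:
  fixes f :: "'a::{finite,distrib_lattice} \<times> 'a set \<Rightarrow> ('a, 'k::comm_ring_1) spoly"
  assumes c: "c \<notin> Bas i"
  shows "applyM (Bast i) pcoef f c = 0"
  unfolding applyM_def
proof (rule sum.neutral, rule ballI)
  fix b :: "'a \<times> 'a set" assume b: "b \<in> Bast i"
  obtain r T where rT: "b = (r, T)" by (cases b)
  have "(topT r T, Tr r T) \<in> Bas i" using pi0_in b rT by blast
  then have "c \<noteq> (topT r T, Tr r T)" using c by blast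
  then show "f b * pcoef b c = 0" unfolding rT pcoef_def by simp
qed

lemma sign_sq: "((-1) ^ i * (-1) ^ i :: 'r::comm_ring_1) = 1"
  by (simp flip: power_mult_distrib)

lemma pi_bij:
  "bij_betw (applyM (Bast i) (pcoef :: _ \<Rightarrow> _ \<Rightarrow> ('a::{finite,distrib_lattice}, 'k::comm_ring_1) spoly))
     (Fmod (Bast i)) (Fmod (Bas i))"
proof -
  let ?P = "applyM (Bast i) (pcoef :: _ \<Rightarrow> _ \<Rightarrow> ('a, 'k) spoly)"
  define Q where "Q g = (\<lambda>b::'a \<times> 'a set. if b \<in> Bast i then (-1) ^ i * g (topT (fst b) (snd b), Tr (fst b) (snd b)) else 0)"
    for g :: "'a \<times> 'a set \<Rightarrow> ('a, 'k) spoly"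
  have at: "?P f (topT r T, Tr r T) = (-1) ^ i * f (r, T)" if "(r, T) \<in> Bast i" for f :: "'a \<times> 'a set \<Rightarrow> ('a, 'k) spoly" and r :: 'a and T
    by (rule phi_at[OF that])
  show ?thesis
  proof (rule bij_betw_byWitness[where f' = Q])
    show "\<forall>f\<in>(Fmod (Bast i) :: ('a \<times> 'a set \<Rightarrow> ('a, 'k) spoly) set). Q (?P f) = f"
    proof
      fix f :: "'a \<times> 'a set \<Rightarrow> ('a, 'k) spoly" assume f: "f \<in> Fmod (Bast i)"
      show "Q (?P f) = f"
      proof
        fix b
        show "Q (?P f) b = f b"
        proof (cases "b \<in> Bast i")
          case True
          obtain r T where rT: "b = (r, T)" by (cases b)
          have "Q (?P f) b = (-1) ^ i * ((-1) ^ i * f (r, T))" unfolding Q_def using True rT at by simp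
          also have "\<dots> = f b" using rT by (simp add: mult.assoc[symmetric] sign_sq)
          finally show ?thesis .
        next
          case False
          have "f b = 0" using f False unfolding Fmod_def by blast
          then show ?thesis unfolding Q_def using False by simp
        qed
      qed
    qed
    show "\<forall>g\<in>(Fmod (Bas i) :: ('a \<times> 'a set \<Rightarrow> ('a, 'k) spoly) set). ?P (Q g) = g"
    proof
      fix g :: "'a \<times> 'a set \<Rightarrow> ('a, 'k) spoly" assume g: "g \<in> Fmod (Bas i)"
      show "?P (Q g) = g"
      proof
        fix c
        show "?P (Q g) c = g c"
        proof (cases "c \<in> Bas i")
          case True
          obtain p U where pU: "c = (p, U)" by (cases c)
          obtain r T where rT: "(r, T) \<in> Bast i" "topT r T = p" "Tr r T = U"
            using pi0_surj True pU by blast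
          have "?P (Q g) c = (-1) ^ i * Q g (r, T)" using at[OF rT(1)] rT pU by simp
          also have "\<dots> = (-1) ^ i * ((-1) ^ i * g c)" unfolding Q_def using rT pU by simp
          also have "\<dots> = g c" by (simp add: mult.assoc[symmetric] sign_sq)
          finally show ?thesis .
        next
          case False
          have "g c = 0" using g False unfolding Fmod_def by blast
          then show ?thesis using phi_off[OF False] by simp
        qed
      qed
    qed
    show "?P ` Fmod (Bast i) \<subseteq> Fmod (Bas i)"
    proof
      fix h assume "h \<in> ?P ` Fmod (Bast i)"
      then obtain f where f: "f \<in> Fmod (Bast i)" "h = ?P f" by blast
      have "h c \<in> Scar" for c
      proof (cases "c \<in> Bas i")
        case True
        obtain p U where pU: "c = (p, U)" by (cases c)
        obtain r T where rT: "(r, T) \<in> Bast i" "topT r T = p" "Tr r T = U"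
          using pi0_surj True pU by blast
        have "h c = (-1) ^ i * f (r, T)" using at[OF rT(1)] rT pU f by simp
        moreover have "f (r, T) \<in> Scar" using f(1) unfolding Fmod_def by blast
        ultimately show ?thesis using Scar_sign by simp
      next
        case False
        have "h c = 0" unfolding f(2) by (rule phi_off[OF False])
        then show ?thesis using Scar_zero by simp
      qed
      moreover have "h c = 0" if "c \<notin> Bas i" for c unfolding f(2) by (rule phi_off[OF that])
      ultimately show "h \<in> Fmod (Bas i)" by (simp add: Fmod_def)
    qed
    show "Q ` Fmod (Bas i) \<subseteq> Fmod (Bast i)"
    proof
      fix h assume "h \<in> Q ` Fmod (Bas i)"
      then obtain g where g: "g \<in> Fmod (Bas i)" "h = Q g" by blast
      have gS: "\<And>c. g c \<in> Scar" using g(1) unfolding Fmod_def by blast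
      have "h b \<in> Scar" for b
      proof (cases "b \<in> Bast i")
        case True
        then have "h b = (-1) ^ i * g (topT (fst b) (snd b), Tr (fst b) (snd b))" unfolding g(2) Q_def by simp
        then show ?thesis using Scar_sign[OF gS] by simp
      next
        case False
        then have "h b = 0" unfolding g(2) Q_def by simp
        then show ?thesis using Scar_zero by simp
      qed
      moreover have "h b = 0" if "b \<notin> Bast i" for b using that g by (simp add: Q_def)
      ultimately show "h \<in> Fmod (Bast i)" by (simp add: Fmod_def)
    qed
  qed
qed


section \<open>The chain map identity\<close>

lemma sum_delta_mult:
  assumes "finite B" "x \<in> B"
  shows "(\<Sum>b\<in>B. (if b = x then a else 0) * g b) = a * (g x :: 'r::comm_ring_1)"
proof -
  have "(\<Sum>b\<in>B. (if b = x then a else 0) * g b) = (\<Sum>b\<in>B. if b = x then a * g b else 0)"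
    by (rule sum.cong) simp_all
  also have "\<dots> = a * g x" using assms by simp
  finally show ?thesis .
qed

lemma key:
  fixes r :: "'a::{finite,distrib_lattice}" and lt :: "'a \<Rightarrow> 'a \<Rightarrow> bool"
  assumes b: "(r, T) \<in> Bast i" and i: "1 \<le> i"
  shows "(-1) ^ i * (dcoef lt (topT r T, Tr r T) c :: ('a, 'k::comm_ring_1) spoly)
       = (\<Sum>b\<in>Bast (i - 1). sdtcoef lt (r, T) b * pcoef b c)"
proof -
  have Tu: "T \<subseteq> upperN r" "card T = i" using b by (auto simp: Bast_def)
  interpret bint r T by (rule bint_upper[OF Tu(1)])
  define P where "P = topT r T"
  define U where "U = Tr r T"
  define eps :: "'a \<Rightarrow> ('a, 'k) spoly" where "eps s = (-1) ^ lam lt (diffel s r) ((\<lambda>s'. diffel s' r) ` T)" for s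
  define b1 where "b1 s = (r, T - {s})" for s
  define b2 where "b2 s = (s, (\<lambda>t. sup s t) ` (T - {s}))" for s
  define e :: "('a, 'k) spoly" where "e = (-1) ^ (i - 1)"
  have ei: "(-1) ^ i = - e"
  proof -
    have "i = Suc (i - 1)" using i by simp
    then have "(-1::('a, 'k) spoly) ^ i = (-1) * (-1) ^ (i - 1)" by (metis power_Suc)
    then show ?thesis unfolding e_def by simp
  qed
  have fin: "finite (Bast (i - 1) :: ('a \<times> 'a set) set)" by simp
  have cT1: "card (T - {s}) = i - 1" if "s \<in> T" for s using that Tu(2) by simp
  have b1B: "b1 s \<in> Bast (i - 1)" if s: "s \<in> T" for s
    using Tu(1) cT1[OF s] unfolding b1_def Bast_def by auto
  have b2B: "b2 s \<in> Bast (i - 1)" if s: "s \<in> T" for s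
  proof -
    have "card ((\<lambda>t. sup s t) ` (T - {s})) = i - 1"
      using card_image[OF sup_img_inj[OF s]] cT1[OF s] by simp
    then show ?thesis using sup_img_upper[OF s] unfolding b2_def Bast_def by auto
  qed
  have pc1: "pcoef (b1 s) c = (if c = (u s, inf (u s) ` (U - {u s})) then e else 0)" if s: "s \<in> T" for s
  proof -
    have "topT r (T - {s}) = u s" by (simp add: u_def)
    moreover have "Tr r (T - {s}) = inf (u s) ` (U - {u s})" unfolding U_def by (rule Tr_minus[OF s])
    ultimately show ?thesis unfolding b1_def pcoef_def e_def using cT1[OF s] by simp
  qed
  have pc2: "pcoef (b2 s) c = (if c = (P, U - {u s}) then e else 0)" if s: "s \<in> T" for s
  proof -
    have "card ((\<lambda>t. sup s t) ` (T - {s})) = i - 1"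
      using card_image[OF sup_img_inj[OF s]] cT1[OF s] by simp
    then show ?thesis unfolding b2_def pcoef_def e_def P_def U_def
      using top_sup_img[OF s] Tr_sup_img[OF s] by simp
  qed
  have dif: "diffel P (u s) = diffel s r" if s: "s \<in> T" for s
  proof -
    have "ell P - ell (u s) = ell s - ell r"
      unfolding P_def by (rule ell_diff[OF sup_s_u[OF s] inf_s_u[OF s]])
    then show ?thesis by (simp add: diffel_def)
  qed
  have lamU: "diffel P ` U = (\<lambda>s'. diffel s' r) ` T"
  proof -
    have "diffel P ` U = (\<lambda>s. diffel P (u s)) ` T" unfolding U_def Tr_eq by (simp add: image_image)
    also have "\<dots> = (\<lambda>s'. diffel s' r) ` T" by (rule image_cong[OF refl]) (rule dif)
    finally show ?thesis .
  qed
  define h :: "'a \<Rightarrow> ('a, 'k) spoly" where "h q = (-1) ^ lam lt (diffel P q) (diffel P ` U) *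
        ((if c = (P, U - {q}) then Yv (diffel P q) else 0)
       - (if c = (q, (\<lambda>u. inf q u) ` (U - {q})) then Xv (diffel P q) else 0))" for q
  have lhs: "(dcoef lt (P, U) c :: ('a, 'k) spoly) = (\<Sum>s\<in>T. h (u s))"
  proof -
    have "(dcoef lt (P, U) c :: ('a, 'k) spoly) = (\<Sum>q\<in>U. h q)"
      unfolding dcoef_def h_def by simp
    also have "\<dots> = (\<Sum>q\<in>u ` T. h q)" unfolding U_def Tr_eq ..
    also have "\<dots> = (\<Sum>s\<in>T. h (u s))" by (rule sum.reindex[OF u_inj, unfolded comp_def])
    finally show ?thesis .
  qed
  have hu: "h (u s) = eps s * ((if c = (P, U - {u s}) then Yv (diffel s r) else 0)
       - (if c = (u s, inf (u s) ` (U - {u s})) then Xv (diffel s r) else 0))" if s: "s \<in> T" for s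
    unfolding h_def eps_def by (simp only: dif[OF s] lamU)
  have rhs: "(\<Sum>b\<in>Bast (i - 1). sdtcoef lt (r, T) b * pcoef b c)
      = (\<Sum>s\<in>T. eps s * (Xv (diffel s r) * pcoef (b1 s) c - Yv (diffel s r) * pcoef (b2 s) c))"
  proof -
    have "(\<Sum>b\<in>Bast (i - 1). sdtcoef lt (r, T) b * pcoef b c)
        = (\<Sum>b\<in>Bast (i - 1). \<Sum>s\<in>T. eps s * ((if b = b1 s then Xv (diffel s r) else 0)
             - (if b = b2 s then Yv (diffel s r) else 0)) * pcoef b c)"
      unfolding sdt_expand sum_distrib_right eps_def b1_def b2_def ..
    also have "\<dots> = (\<Sum>s\<in>T. \<Sum>b\<in>Bast (i - 1). eps s * ((if b = b1 s then Xv (diffel s r) else 0)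
             - (if b = b2 s then Yv (diffel s r) else 0)) * pcoef b c)"
      by (rule sum.swap)
    also have "\<dots> = (\<Sum>s\<in>T. eps s * (Xv (diffel s r) * pcoef (b1 s) c - Yv (diffel s r) * pcoef (b2 s) c))"
    proof (rule sum.cong[OF refl])
      fix s assume s: "s \<in> T"
      have "(\<Sum>b\<in>Bast (i - 1). eps s * ((if b = b1 s then Xv (diffel s r) else 0)
             - (if b = b2 s then Yv (diffel s r) else 0)) * pcoef b c)
          = (\<Sum>b\<in>Bast (i - 1). (if b = b1 s then eps s * Xv (diffel s r) else 0) * pcoef b c)
            - (\<Sum>b\<in>Bast (i - 1). (if b = b2 s then eps s * Yv (diffel s r) else 0) * pcoef b c)"
        unfolding sum_subtractf[symmetric] by (rule sum.cong[OF refl]) (simp add: algebra_simps)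
      also have "\<dots> = eps s * Xv (diffel s r) * pcoef (b1 s) c - eps s * Yv (diffel s r) * pcoef (b2 s) c"
        using sum_delta_mult[OF fin b1B[OF s], of _ "\<lambda>b. (pcoef b c :: ('a, 'k) spoly)"]
          sum_delta_mult[OF fin b2B[OF s], of _ "\<lambda>b. (pcoef b c :: ('a, 'k) spoly)"] by simp
      finally show "(\<Sum>b\<in>Bast (i - 1). eps s * ((if b = b1 s then Xv (diffel s r) else 0)
             - (if b = b2 s then Yv (diffel s r) else 0)) * pcoef b c)
          = eps s * (Xv (diffel s r) * pcoef (b1 s) c - Yv (diffel s r) * pcoef (b2 s) c)"
        by (simp add: algebra_simps)
    qed
    finally show ?thesis .
  qed
  have "(-1) ^ i * (dcoef lt (topT r T, Tr r T) c :: ('a, 'k) spoly) = (\<Sum>s\<in>T. (-1) ^ i * h (u s))"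
    using lhs unfolding P_def U_def by (simp add: sum_distrib_left)
  also have "\<dots> = (\<Sum>s\<in>T. eps s * (Xv (diffel s r) * pcoef (b1 s) c - Yv (diffel s r) * pcoef (b2 s) c))"
  proof (rule sum.cong[OF refl])
    fix s assume s: "s \<in> T"
    have neq: "u s \<noteq> P" using coatom[OF s] unfolding P_def covers_def by auto
    show "(-1) ^ i * h (u s) = eps s * (Xv (diffel s r) * pcoef (b1 s) c - Yv (diffel s r) * pcoef (b2 s) c)"
      unfolding hu[OF s] pc1[OF s] pc2[OF s] ei
      by (cases "c = (P, U - {u s})"; cases "c = (u s, inf (u s) ` (U - {u s}))") (use neq in \<open>simp_all add: algebra_simps\<close>)
  qed
  also have "\<dots> = (\<Sum>b\<in>Bast (i - 1). sdtcoef lt (r, T) b * pcoef b c)" using rhs by simp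
  finally show ?thesis .
qed

lemma chain:
  fixes lt :: "'a::{finite,distrib_lattice} \<Rightarrow> 'a \<Rightarrow> bool"
    and f :: "'a \<times> 'a set \<Rightarrow> ('a, 'k::comm_ring_1) spoly"
  assumes i: "1 \<le> i"
  shows "applyM (Bas i) (dcoef lt) (applyM (Bast i) pcoef f)
       = applyM (Bast (i - 1)) pcoef (applyM (Bast i) (sdtcoef lt) f)"
proof
  fix c
  let ?P = "applyM (Bast i) (pcoef :: _ \<Rightarrow> _ \<Rightarrow> ('a, 'k) spoly)"
  define pi0 where "pi0 b = (topT (fst b) (snd b), Tr (fst b) (snd b))" for b :: "'a \<times> 'a set"
  have img: "pi0 ` Bast i = Bas i"
  proof
    show "pi0 ` Bast i \<subseteq> Bas i" using pi0_in by (auto simp: pi0_def)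
    show "Bas i \<subseteq> pi0 ` Bast i"
    proof
      fix x :: "'a \<times> 'a set" assume x: "x \<in> Bas i"
      obtain p U where pU: "x = (p, U)" by (cases x)
      obtain r T where rT: "(r, T) \<in> Bast i" "topT r T = p" "Tr r T = U"
        using pi0_surj x pU by blast
      show "x \<in> pi0 ` Bast i" using rT pU by (force simp: pi0_def)
    qed
  qed
  have inj: "inj_on pi0 (Bast i)"
  proof (rule inj_onI)
    fix x y assume x: "x \<in> Bast i" and y: "y \<in> Bast i" and e: "pi0 x = pi0 y"
    obtain r T where rT: "x = (r, T)" by (cases x)
    obtain r' T' where rT': "y = (r', T')" by (cases y)
    show "x = y" using pi0_inj[of T r T' r'] x y e rT rT' by (auto simp: pi0_def Bast_def)
  qed
  have "applyM (Bas i) (dcoef lt) (?P f) c = (\<Sum>b\<in>pi0 ` Bast i. ?P f b * dcoef lt b c)"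
    unfolding applyM_def img ..
  also have "\<dots> = (\<Sum>b\<in>Bast i. ?P f (pi0 b) * dcoef lt (pi0 b) c)"
    by (rule sum.reindex[OF inj, unfolded comp_def])
  also have "\<dots> = (\<Sum>b\<in>Bast i. f b * ((-1) ^ i * dcoef lt (pi0 b) c))"
  proof (rule sum.cong[OF refl])
    fix b :: "'a \<times> 'a set" assume b: "b \<in> Bast i"
    obtain r T where rT: "b = (r, T)" by (cases b)
    have "?P f (pi0 b) = (-1) ^ i * f b" unfolding rT pi0_def using phi_at[of r T i f] b rT by simp
    then show "?P f (pi0 b) * dcoef lt (pi0 b) c = f b * ((-1) ^ i * dcoef lt (pi0 b) c)"
      by (simp add: algebra_simps)
  qed
  also have "\<dots> = (\<Sum>b\<in>Bast i. f b * (\<Sum>b'\<in>Bast (i - 1). sdtcoef lt b b' * pcoef b' c))"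
  proof (rule sum.cong[OF refl])
    fix b :: "'a \<times> 'a set" assume b: "b \<in> Bast i"
    obtain r T where rT: "b = (r, T)" by (cases b)
    have "(-1) ^ i * dcoef lt (pi0 b) c = (\<Sum>b'\<in>Bast (i - 1). sdtcoef lt b b' * (pcoef b' c :: ('a, 'k) spoly))"
      unfolding rT pi0_def fst_conv snd_conv by (rule key) (use b rT i in simp_all)
    then show "f b * ((-1) ^ i * dcoef lt (pi0 b) c) = f b * (\<Sum>b'\<in>Bast (i - 1). sdtcoef lt b b' * pcoef b' c)"
      by simp
  qed
  also have "\<dots> = (\<Sum>b'\<in>Bast (i - 1). (\<Sum>b\<in>Bast i. f b * sdtcoef lt b b') * pcoef b' c)"
  proof -
    have "(\<Sum>b\<in>Bast i. f b * (\<Sum>b'\<in>Bast (i - 1). sdtcoef lt b b' * pcoef b' c))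
        = (\<Sum>b\<in>Bast i. \<Sum>b'\<in>Bast (i - 1). f b * (sdtcoef lt b b' * pcoef b' c))"
      by (simp only: sum_distrib_left)
    also have "\<dots> = (\<Sum>b'\<in>Bast (i - 1). \<Sum>b\<in>Bast i. f b * (sdtcoef lt b b' * pcoef b' c))"
      by (rule sum.swap)
    also have "\<dots> = (\<Sum>b'\<in>Bast (i - 1). (\<Sum>b\<in>Bast i. f b * sdtcoef lt b b') * pcoef b' c)"
      by (simp only: sum_distrib_right mult.assoc)
    finally show ?thesis .
  qed
  also have "\<dots> = applyM (Bast (i - 1)) pcoef (applyM (Bast i) (sdtcoef lt) f) c"
    unfolding applyM_def ..
  finally show "applyM (Bas i) (dcoef lt) (?P f) c = applyM (Bast (i - 1)) pcoef (applyM (Bast i) (sdtcoef lt) f) c" .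
qed

theorem proposition3p6:
  fixes lt :: "'a::{finite, distrib_lattice} \<Rightarrow> 'a \<Rightarrow> bool"
    and K :: "'k::field itself"
  assumes irrefl: "\<forall>p\<in>JI. \<not> lt p p"
    and trans: "\<forall>p\<in>JI. \<forall>q\<in>JI. \<forall>r\<in>JI. lt p q \<longrightarrow> lt q r \<longrightarrow> lt p r"
    and total: "\<forall>p\<in>JI. \<forall>q\<in>JI. p \<noteq> q \<longrightarrow> lt p q \<or> lt q p"
    and extends: "\<forall>p\<in>JI. \<forall>q\<in>JI. p < q \<longrightarrow> lt p q"
  shows "(\<forall>i. bij_betw (applyM (Bast i) (pcoef :: _ \<Rightarrow> _ \<Rightarrow> ('a, 'k) spoly))
                        (Fmod (Bast i)) (Fmod (Bas i)))
       \<and> (\<forall>i\<ge>1. \<forall>f \<in> (Fmod (Bast i) :: ('a \<times> 'a set \<Rightarrow> ('a, 'k) spoly) set).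
            applyM (Bas i) (dcoef lt) (applyM (Bast i) pcoef f)
          = applyM (Bast (i - 1)) pcoef (applyM (Bast i) (sdtcoef lt) f))"
proof (intro conjI allI impI ballI)
  fix i :: nat
  show "bij_betw (applyM (Bast i) (pcoef :: _ \<Rightarrow> _ \<Rightarrow> ('a, 'k) spoly)) (Fmod (Bast i)) (Fmod (Bas i))"
    by (rule pi_bij)
next
  fix i :: nat and f :: "'a \<times> 'a set \<Rightarrow> ('a, 'k) spoly"
  assume "1 \<le> i" "f \<in> Fmod (Bast i)"
  then show "applyM (Bas i) (dcoef lt) (applyM (Bast i) pcoef f)
          = applyM (Bast (i - 1)) pcoef (applyM (Bast i) (sdtcoef lt) f)"
    by (intro chain)
qed

end
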